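(* Let $\nu\in(0,\infty)$ and $x\in\mathbb X$. The following are equivalent: (i) there is $c_1>0$ with $\gamma_x(r)\le c_1r^{-\nu}$ for all $r>0$; (ii) there is $c_2>0$ with $\|Ax-Ax_\alpha\|_{\mathbb Y}\le c_2\alpha^{\frac\nu{1+\nu}}$ for all $\alpha>0$ and all $x_\alpha\in R_\alpha(Ax)$. More precisely, (i) implies (ii) with $c_2=4c_1^{\frac1{1+\nu}}$, and (ii) implies (i) with $c_1=c_2^{1+\nu}$.
   Context: Standing setting: $\mathbb X$ real Banach space, $\tau$ a topology with $(\mathbb X,\tau)$ locally convex Hausdorff; $\mathcal R:\mathbb X\to(-\infty,\infty]$ proper convex with $\tau$-compact sublevel sets; $\mathbb Y$ real Hilbert space; $A:\mathbb X\to\mathbb Y$ linear, $\tau$-to-weak continuous. $R_\alpha(g):=\operatorname{argmin}_{x\in\mathrm{dom}(\mathcal R)}(\frac1{2\alpha}\|g-Ax\|_{\mathbb Y}^2+\mathcal R(x))$, $\varrho_1(z):=\sup\{\beta^{-1}\|Az-Az_\beta\|_{\mathbb Y}:\beta>0,z_\beta\in R_\beta(Az)\}$. For $r\ge0$, $B_r:=\{z\in\mathbb X:\varrho_1(z)\le r\}$ and $\gamma_x(r):=\inf_{z\in B_r}\|Ax-Az\|_{\mathbb Y}$. *)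

theory Defs
  imports "HOL-Analysis.Analysis"
begin

definition locally_convex_topology :: "('a::real_vector) topology \<Rightarrow> bool" where
  "locally_convex_topology T \<longleftrightarrow>
     topspace T = UNIV \<and>
     continuous_map (prod_topology T T) T (\<lambda>(x, y). x + y) \<and>
     continuous_map (prod_topology euclideanreal T) T (\<lambda>(c, x). c *\<^sub>R x) \<and>
     (\<forall>U x. openin T U \<and> x \<in> U \<longrightarrow> (\<exists>V. openin T V \<and> convex V \<and> x \<in> V \<and> V \<subseteq> U))"

definition weak_topology :: "('b::real_inner) topology" where
  "weak_topology = topology_generated_by {(\<lambda>y. y \<bullet> v) -` U | v U. open U}"

definition edom :: "('a \<Rightarrow> ereal) \<Rightarrow> 'a set" where
  "edom R = {x. R x < \<infinity>}"

definition proper_convex :: "('a::real_vector \<Rightarrow> ereal) \<Rightarrow> bool" where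
  "proper_convex R \<longleftrightarrow> (\<forall>x. R x \<noteq> -\<infinity>) \<and> edom R \<noteq> {} \<and>
     (\<forall>x y t. 0 < t \<and> t < 1 \<longrightarrow>
        R ((1 - t) *\<^sub>R x + t *\<^sub>R y) \<le> ereal (1 - t) * R x + ereal t * R y)"

definition tikh :: "('a \<Rightarrow> 'b::real_normed_vector) \<Rightarrow> ('a \<Rightarrow> ereal) \<Rightarrow> real \<Rightarrow> 'b \<Rightarrow> 'a set" where
  "tikh A R \<alpha> g =
     {x \<in> edom R. \<forall>z \<in> edom R.
        ereal ((norm (g - A x))\<^sup>2 / (2 * \<alpha>)) + R x \<le> ereal ((norm (g - A z))\<^sup>2 / (2 * \<alpha>)) + R z}"

definition rho1 :: "('a \<Rightarrow> 'b::real_normed_vector) \<Rightarrow> ('a \<Rightarrow> ereal) \<Rightarrow> 'a \<Rightarrow> ereal" where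
  "rho1 A R z = (SUP p \<in> {(\<beta>, z\<^sub>\<beta>). \<beta> > 0 \<and> z\<^sub>\<beta> \<in> tikh A R \<beta> (A z)}.
                    ereal (norm (A z - A (snd p)) / fst p))"

definition Bset :: "('a \<Rightarrow> 'b::real_normed_vector) \<Rightarrow> ('a \<Rightarrow> ereal) \<Rightarrow> real \<Rightarrow> 'a set" where
  "Bset A R r = {z. rho1 A R z \<le> ereal r}"

definition gamma :: "('a \<Rightarrow> 'b::real_normed_vector) \<Rightarrow> ('a \<Rightarrow> ereal) \<Rightarrow> 'a \<Rightarrow> real \<Rightarrow> ereal" where
  "gamma A R x r = (INF z \<in> Bset A R r. ereal (norm (A x - A z)))"

end

theory Submission
  imports Defs
begin

lemma small_t:
  fixes D e :: real
  assumes "\<And>t. 0 < t \<Longrightarrow> t < 1 \<Longrightarrow> D \<le> t * e" "e \<ge> 0"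
  shows "D \<le> 0"
proof (rule ccontr)
  assume "\<not> D \<le> 0"
  hence D: "D > 0" by simp
  define t where "t = min (1/2) (D / (2 * (e + 1)))"
  have t0: "0 < t" "t < 1" using D assms(2) by (auto simp: t_def)
  have "t * e \<le> (D / (2 * (e + 1))) * e" using t0 assms(2) by (intro mult_right_mono) (auto simp: t_def)
  also have "\<dots> = (D / 2) * (e / (e + 1))" by simp
  also have "\<dots> \<le> (D / 2) * 1" using D assms(2) by (intro mult_left_mono) auto
  also have "\<dots> < D" using D by simp
  finally show False using assms(1)[OF t0] by simp
qed

lemma real_R:
  assumes "proper_convex R" "z \<in> edom R"
  shows "R z = ereal (real_of_ereal (R z))"
  using assms unfolding proper_convex_def edom_def by (cases "R z") auto

lemma vi:
  fixes A :: "'a::real_vector \<Rightarrow> 'b::real_inner"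
  assumes pc: "proper_convex R" and lin: "linear A" and al: "\<alpha> > 0"
    and u: "u \<in> tikh A R \<alpha> y" and w: "w \<in> edom R"
  shows "real_of_ereal (R u) - real_of_ereal (R w) \<le> ((y - A u) \<bullet> (A u - A w)) / \<alpha>"
proof -
  have ue: "u \<in> edom R" and umin: "\<And>z. z \<in> edom R \<Longrightarrow>
        ereal ((norm (y - A u))\<^sup>2 / (2 * \<alpha>)) + R u \<le> ereal ((norm (y - A z))\<^sup>2 / (2 * \<alpha>)) + R z"
    using u unfolding tikh_def by auto
  define Ru where "Ru = real_of_ereal (R u)"
  define Rw where "Rw = real_of_ereal (R w)"
  have Ru: "R u = ereal Ru" using real_R[OF pc ue] Ru_def by simp
  have Rw: "R w = ereal Rw" using real_R[OF pc w] Rw_def by simp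
  define a where "a = y - A u"
  define b where "b = A w - A u"
  have key: "Ru - Rw + (a \<bullet> b) / \<alpha> \<le> t * ((norm b)\<^sup>2 / (2 * \<alpha>))" if t: "0 < t" "t < 1" for t
  proof -
    define wt where "wt = (1 - t) *\<^sub>R u + t *\<^sub>R w"
    have cv: "R wt \<le> ereal (1 - t) * R u + ereal t * R w"
      using pc t unfolding proper_convex_def wt_def by blast
    hence cv': "R wt \<le> ereal ((1 - t) * Ru + t * Rw)" by (simp add: Ru Rw)
    hence wte: "wt \<in> edom R" unfolding edom_def by (auto intro: le_less_trans)
    have Rwt: "R wt = ereal (real_of_ereal (R wt))" by (rule real_R[OF pc wte])
    have Awt: "y - A wt = a - t *\<^sub>R b"
      unfolding wt_def a_def b_def using lin
      by (simp add: linear_add linear_scale algebra_simps linear_diff)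
    have "ereal ((norm a)\<^sup>2 / (2 * \<alpha>)) + ereal Ru \<le> ereal ((norm (a - t *\<^sub>R b))\<^sup>2 / (2 * \<alpha>)) + R wt"
      using umin[OF wte] Ru Awt a_def by simp
    also have "\<dots> \<le> ereal ((norm (a - t *\<^sub>R b))\<^sup>2 / (2 * \<alpha>)) + ereal ((1 - t) * Ru + t * Rw)"
      using cv' by (rule add_left_mono)
    finally have i: "(norm a)\<^sup>2 / (2 * \<alpha>) + Ru \<le> (norm (a - t *\<^sub>R b))\<^sup>2 / (2 * \<alpha>) + ((1 - t) * Ru + t * Rw)"
      by simp
    have n: "(norm (a - t *\<^sub>R b))\<^sup>2 = (norm a)\<^sup>2 - 2 * t * (a \<bullet> b) + t\<^sup>2 * (norm b)\<^sup>2"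
      unfolding power2_norm_eq_inner
      by (simp add: inner_diff_left inner_diff_right algebra_simps power2_eq_square inner_commute)
    have sp: "((norm a)\<^sup>2 - 2 * t * (a \<bullet> b) + t\<^sup>2 * (norm b)\<^sup>2) / (2 * \<alpha>)
        = (norm a)\<^sup>2 / (2 * \<alpha>) + (- 2 * t * (a \<bullet> b) + t\<^sup>2 * (norm b)\<^sup>2) / (2 * \<alpha>)"
      by (simp add: add_divide_distrib diff_divide_distrib)
    have eq2: "(- 2 * t * (a \<bullet> b) + t\<^sup>2 * (norm b)\<^sup>2) / (2 * \<alpha>)
        = t * (- (a \<bullet> b) / \<alpha> + t * ((norm b)\<^sup>2 / (2 * \<alpha>)))"
      using al by (simp add: field_simps power2_eq_square)
    have "t * (Ru - Rw) \<le> t * (- (a \<bullet> b) / \<alpha> + t * ((norm b)\<^sup>2 / (2 * \<alpha>)))"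
      using i unfolding n sp eq2 by (simp add: algebra_simps)
    hence "Ru - Rw \<le> - (a \<bullet> b) / \<alpha> + t * ((norm b)\<^sup>2 / (2 * \<alpha>))"
      using t by simp
    thus ?thesis by simp
  qed
  have "Ru - Rw + (a \<bullet> b) / \<alpha> \<le> 0"
    by (rule small_t[OF key]) (use al in auto)
  moreover have "(y - A u) \<bullet> (A u - A w) = - (a \<bullet> b)"
    unfolding a_def b_def by (simp add: inner_diff_right)
  ultimately show ?thesis by (simp add: Ru_def Rw_def)
qed

lemma tikh_edom: "u \<in> tikh A R \<alpha> y \<Longrightarrow> u \<in> edom R"
  unfolding tikh_def by auto

lemma ne:
  fixes A :: "'a::real_vector \<Rightarrow> 'b::real_inner"
  assumes pc: "proper_convex R" and lin: "linear A" and al: "\<alpha> > 0"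
    and u: "u \<in> tikh A R \<alpha> y" and w: "w \<in> tikh A R \<alpha> q"
  shows "norm (A u - A w) \<le> norm (y - q)"
proof -
  have 1: "real_of_ereal (R u) - real_of_ereal (R w) \<le> ((y - A u) \<bullet> (A u - A w)) / \<alpha>"
    by (rule vi[OF pc lin al u tikh_edom[OF w]])
  have 2: "real_of_ereal (R w) - real_of_ereal (R u) \<le> ((q - A w) \<bullet> (A w - A u)) / \<alpha>"
    by (rule vi[OF pc lin al w tikh_edom[OF u]])
  define d where "d = A u - A w"
  have "0 \<le> ((y - A u) \<bullet> d) / \<alpha> + ((q - A w) \<bullet> (- d)) / \<alpha>"
    using 1 2 unfolding d_def by simp
  hence "0 \<le> ((y - A u) \<bullet> d + (q - A w) \<bullet> (- d)) / \<alpha>"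
    by (simp only: add_divide_distrib)
  hence "0 \<le> (y - A u) \<bullet> d + (q - A w) \<bullet> (- d)"
    using al by (simp add: zero_le_divide_iff)
  also have "(y - A u) \<bullet> d + (q - A w) \<bullet> (- d) = (y - q) \<bullet> d - d \<bullet> d"
    unfolding d_def by (simp add: inner_diff_left inner_diff_right algebra_simps)
  finally have "(norm d)\<^sup>2 \<le> (y - q) \<bullet> d" by (simp add: power2_norm_eq_inner)
  also have "\<dots> \<le> norm (y - q) * norm d" by (rule norm_cauchy_schwarz)
  finally have "norm d * norm d \<le> norm (y - q) * norm d" by (simp add: power2_eq_square)
  hence "norm d \<le> norm (y - q)"
    by (cases "norm d = 0") (auto simp: mult_le_cancel_right)
  thus ?thesis unfolding d_def .
qed

lemma sc:
  fixes A :: "'a::real_vector \<Rightarrow> 'b::real_inner"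
  assumes pc: "proper_convex R" and lin: "linear A" and al: "\<alpha> > 0" and be: "\<beta> > 0"
    and u: "u \<in> tikh A R \<alpha> y" and w: "w \<in> tikh A R \<beta> (A u)"
  shows "norm (A u - A w) \<le> \<beta> * (norm (y - A u) / \<alpha>)"
proof -
  define d where "d = A u - A w"
  have 1: "real_of_ereal (R u) - real_of_ereal (R w) \<le> ((y - A u) \<bullet> d) / \<alpha>"
    unfolding d_def by (rule vi[OF pc lin al u tikh_edom[OF w]])
  have 2: "real_of_ereal (R w) - real_of_ereal (R u) \<le> ((A u - A w) \<bullet> (A w - A u)) / \<beta>"
    by (rule vi[OF pc lin be w tikh_edom[OF u]])
  have "(A u - A w) \<bullet> (A w - A u) = - (norm d)\<^sup>2"
    unfolding d_def power2_norm_eq_inner by (simp add: inner_diff_left inner_diff_right algebra_simps)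
  hence 2: "(norm d)\<^sup>2 / \<beta> \<le> real_of_ereal (R u) - real_of_ereal (R w)" using 2 by simp
  have 3: "((y - A u) \<bullet> d) / \<alpha> \<le> (norm (y - A u) * norm d) / \<alpha>"
    using al by (intro divide_right_mono norm_cauchy_schwarz) auto
  have "(norm d)\<^sup>2 / \<beta> \<le> (norm (y - A u) * norm d) / \<alpha>" using 1 2 3 by linarith
  hence "(norm d)\<^sup>2 / \<beta> \<le> norm d * (norm (y - A u) / \<alpha>)" by (simp add: mult.commute)
  hence "norm d * norm d \<le> norm d * (\<beta> * (norm (y - A u) / \<alpha>))"
    using be by (simp add: field_simps power2_eq_square)
  moreover have "0 \<le> \<beta> * (norm (y - A u) / \<alpha>)" using al be by simp
  ultimately have "norm d \<le> \<beta> * (norm (y - A u) / \<alpha>)"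
    using mult_le_cancel_left_pos[of "norm d" "norm d" "\<beta> * (norm (y - A u) / \<alpha>)"]
    by (cases "norm d = 0") (simp_all only: norm_ge_zero, auto)
  thus ?thesis unfolding d_def .
qed

lemma weak_topspace: "topspace (weak_topology :: 'b::real_inner topology) = UNIV"
proof -
  have "(UNIV :: 'b set) \<in> {(\<lambda>y. y \<bullet> v) -` U | v U. open U}"
    by (rule CollectI, rule exI[of _ 0], rule exI[of _ UNIV]) auto
  thus ?thesis unfolding weak_topology_def topology_generated_by_topspace by blast
qed

lemma weak_open_ball_compl:
  fixes g :: "'b::real_inner"
  shows "openin weak_topology {y. \<rho> < norm (y - g)}"
proof (cases "\<rho> < 0")
  case True
  hence "{y. \<rho> < norm (y - g)} = topspace (weak_topology :: 'b topology)"
    using weak_topspace by (auto intro: less_le_trans)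
  thus ?thesis by simp
next
  case False
  define S :: "'b set set" where "S = (\<lambda>v. (\<lambda>y. y \<bullet> v) -` {g \<bullet> v + \<rho> <..}) ` {v. norm v = 1}"
  have eq: "{y. \<rho> < norm (y - g)} = \<Union>S"
  proof
    show "{y. \<rho> < norm (y - g)} \<subseteq> \<Union>S"
    proof
      fix y assume y: "y \<in> {y. \<rho> < norm (y - g)}"
      hence n0: "norm (y - g) > 0" using False by auto
      define v where "v = (1 / norm (y - g)) *\<^sub>R (y - g)"
      have nv: "norm v = 1" using n0 by (simp add: v_def)
      have "(y - g) \<bullet> v = norm (y - g)"
        using n0 by (simp add: v_def power2_norm_eq_inner[symmetric] power2_eq_square)
      hence "y \<bullet> v = g \<bullet> v + norm (y - g)" by (simp add: inner_diff_left)
      hence "y \<in> (\<lambda>y. y \<bullet> v) -` {g \<bullet> v + \<rho> <..}" using y by simp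
      thus "y \<in> \<Union>S" using nv unfolding S_def by blast
    qed
  next
    show "\<Union>S \<subseteq> {y. \<rho> < norm (y - g)}"
    proof
      fix y assume "y \<in> \<Union>S"
      then obtain v where nv: "norm v = 1" and yv: "y \<bullet> v > g \<bullet> v + \<rho>" unfolding S_def by auto
      have "\<rho> < (y - g) \<bullet> v" using yv by (simp add: inner_diff_left)
      also have "\<dots> \<le> norm (y - g) * norm v" by (rule norm_cauchy_schwarz)
      finally show "y \<in> {y. \<rho> < norm (y - g)}" using nv by simp
    qed
  qed
  have "\<forall>T\<in>S. openin weak_topology T"
  proof
    fix T assume "T \<in> S"
    then obtain v where "T = (\<lambda>y. y \<bullet> v) -` {g \<bullet> v + \<rho> <..}" unfolding S_def by auto
    hence "T \<in> {(\<lambda>y. y \<bullet> v) -` U | v U. open U}" using open_greaterThan by blast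
    thus "openin weak_topology T" unfolding weak_topology_def by (rule topology_generated_by_Basis)
  qed
  thus ?thesis unfolding eq by (simp add: openin_Union)
qed

lemma tikh_exists:
  fixes \<tau> :: "('a::real_vector) topology"
    and A :: "'a \<Rightarrow> 'b::real_inner"
  assumes lc: "locally_convex_topology \<tau>" and hd: "Hausdorff_space \<tau>"
    and pc: "proper_convex R"
    and cpt: "\<And>c. compactin \<tau> {z. R z \<le> ereal c}"
    and cont: "continuous_map \<tau> weak_topology A"
    and al: "\<alpha> > 0"
  shows "\<exists>u. u \<in> tikh A R \<alpha> g"
proof -
  have top: "topspace \<tau> = UNIV" using lc unfolding locally_convex_topology_def by simp
  define a where "a z = (norm (g - A z))\<^sup>2 / (2 * \<alpha>)" for z
  define F where "F z = ereal (a z) + R z" for z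
  have a0: "a z \<ge> 0" for z using al by (simp add: a_def)
  have Rm: "R z \<noteq> -\<infinity>" for z using pc unfolding proper_convex_def by simp
  have openR: "openin \<tau> {z. ereal s < R z}" for s
  proof -
    have "closedin \<tau> {z. R z \<le> ereal s}" by (rule compactin_imp_closedin[OF hd cpt])
    hence "openin \<tau> (topspace \<tau> - {z. R z \<le> ereal s})" by auto
    moreover have "topspace \<tau> - {z. R z \<le> ereal s} = {z. ereal s < R z}" using top by auto
    ultimately show ?thesis by simp
  qed
  have opena: "openin \<tau> {z. q < a z}" for q
  proof -
    define \<rho> where "\<rho> = (if q < 0 then -1 else sqrt (2 * \<alpha> * q))"
    have eq: "{z. q < a z} = {x \<in> topspace \<tau>. A x \<in> {y. \<rho> < norm (y - g)}}"
    proof (cases "q < 0")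
      case True
      thus ?thesis using a0 top by (auto simp: \<rho>_def intro: less_le_trans order.strict_trans2[OF _ norm_ge_zero])
    next
      case False
      have "q < a z \<longleftrightarrow> sqrt (2 * \<alpha> * q) < norm (A z - g)" for z
      proof -
        have "q < a z \<longleftrightarrow> 2 * \<alpha> * q < (norm (A z - g))\<^sup>2"
          using al by (simp add: a_def norm_minus_commute field_simps)
        also have "\<dots> \<longleftrightarrow> sqrt (2 * \<alpha> * q) < norm (A z - g)"
        proof -
          have "sqrt ((norm (A z - g))\<^sup>2) = norm (A z - g)" by simp
          hence "sqrt (2 * \<alpha> * q) < norm (A z - g) \<longleftrightarrow> sqrt (2 * \<alpha> * q) < sqrt ((norm (A z - g))\<^sup>2)"
            by simp
          thus ?thesis by (simp only: real_sqrt_less_iff)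
        qed
        finally show ?thesis .
      qed
      thus ?thesis using False top by (auto simp: \<rho>_def)
    qed
    show ?thesis unfolding eq by (rule openin_continuous_map_preimage[OF cont weak_open_ball_compl])
  qed
  have openF: "openin \<tau> {z. ereal t < F z}" for t
  proof -
    have eq: "{z. ereal t < F z} = (\<Union>q. {z. q < a z} \<inter> {z. ereal (t - q) < R z})"
    proof
      show "{z. ereal t < F z} \<subseteq> (\<Union>q. {z. q < a z} \<inter> {z. ereal (t - q) < R z})"
      proof
        fix z assume z: "z \<in> {z. ereal t < F z}"
        show "z \<in> (\<Union>q. {z. q < a z} \<inter> {z. ereal (t - q) < R z})"
        proof (cases "R z")
          case (real r)
          hence "t < a z + r" using z by (simp add: F_def)
          hence "a z - (a z + r - t) / 2 < a z \<and> ereal (t - (a z - (a z + r - t) / 2)) < R z"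
            using real by (simp add: field_simps)
          thus ?thesis by blast
        next
          case PInf
          hence "a z - 1 < a z \<and> ereal (t - (a z - 1)) < R z" by simp
          thus ?thesis by blast
        next
          case MInf thus ?thesis using Rm by simp
        qed
      qed
    next
      show "(\<Union>q. {z. q < a z} \<inter> {z. ereal (t - q) < R z}) \<subseteq> {z. ereal t < F z}"
      proof
        fix z assume "z \<in> (\<Union>q. {z. q < a z} \<inter> {z. ereal (t - q) < R z})"
        then obtain q where q: "q < a z" "ereal (t - q) < R z" by auto
        show "z \<in> {z. ereal t < F z}"
          using q by (cases "R z") (auto simp: F_def)
      qed
    qed
    show ?thesis unfolding eq
      by (rule openin_Union) (auto intro!: openin_Int opena openR)
  qed
  have closedF: "closedin \<tau> {z. F z \<le> ereal t}" for t
  proof -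
    have "{z. F z \<le> ereal t} = topspace \<tau> - {z. ereal t < F z}" using top by auto
    thus ?thesis using openF[of t] by auto
  qed
  obtain z0 where z0: "z0 \<in> edom R" using pc unfolding proper_convex_def by auto
  define c0 where "c0 = a z0 + real_of_ereal (R z0)"
  have Fz0: "F z0 = ereal c0" using real_R[OF pc z0] unfolding F_def c0_def by (metis plus_ereal.simps(1))
  define K where "K = {z. F z \<le> ereal c0}"
  have FR: "R z \<le> F z" for z using a0[of z] by (cases "R z") (auto simp: F_def)
  have K: "compactin \<tau> K"
    by (rule closed_compactin[OF cpt[of c0]]) (use FR in \<open>auto simp: K_def intro: order_trans closedF\<close>)
  define m where "m = (INF z. F z)"
  define T where "T = {t::real. m < ereal t}"
  define U where "U = (\<lambda>t. {z. F z \<le> ereal t}) ` T"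
  have "K \<inter> \<Inter>U \<noteq> {}"
  proof -
    have "(\<forall>C\<in>U. closedin \<tau> C) \<and> (\<forall>\<F>. finite \<F> \<and> \<F> \<subseteq> U \<longrightarrow> K \<inter> \<Inter>\<F> \<noteq> {}) \<longrightarrow> K \<inter> \<Inter>U \<noteq> {}"
      using K unfolding compactin_fip by blast
    moreover have "\<forall>C\<in>U. closedin \<tau> C" using closedF unfolding U_def by auto
    moreover have "K \<inter> \<Inter>\<F> \<noteq> {}" if FF: "finite \<F>" "\<F> \<subseteq> U" for \<F>
    proof -
      obtain T' where T': "T' \<subseteq> T" "finite T'" "\<F> = (\<lambda>t. {z. F z \<le> ereal t}) ` T'"
        using FF unfolding U_def by (meson finite_subset_image)
      show ?thesis
      proof (cases "T' = {}")
        case True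
        hence "z0 \<in> K \<inter> \<Inter>\<F>" using T' Fz0 by (auto simp: K_def)
        thus ?thesis by blast
      next
        case False
        define tm where "tm = Min T'"
        have "tm \<in> T'" using T' False Min_in[of T'] by (simp add: tm_def)
        hence tm: "tm \<in> T" "\<And>t. t \<in> T' \<Longrightarrow> tm \<le> t"
          using T' by (auto simp: tm_def)
        hence "(INF z. F z) < ereal tm" by (simp add: T_def m_def)
        then obtain z where z: "F z < ereal tm" by (auto simp: INF_less_iff)
        define z' where "z' = (if F z \<le> F z0 then z else z0)"
        have "F z' \<le> F z0" "F z' \<le> F z" by (auto simp: z'_def)
        moreover have "F z' \<le> ereal t" if "t \<in> T'" for t
        proof -
          have "F z' \<le> F z" by fact
          also have "\<dots> \<le> ereal tm" using z by simp
          also have "\<dots> \<le> ereal t" using tm(2)[OF that] by simp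
          finally show ?thesis .
        qed
        ultimately have "z' \<in> K \<inter> \<Inter>\<F>" using T' Fz0
          by (auto simp: K_def)
        thus ?thesis by blast
      qed
    qed
    ultimately show ?thesis by blast
  qed
  then obtain u where uK: "u \<in> K" and uU: "u \<in> \<Inter>U" by blast
  have um: "F u \<le> m"
  proof (rule ccontr)
    assume "\<not> F u \<le> m"
    hence "m < F u" by simp
    then obtain t where t: "m < ereal t" "ereal t < F u" using ereal_dense2 by blast
    hence "{z. F z \<le> ereal t} \<in> U" unfolding U_def T_def by auto
    hence "F u \<le> ereal t" using uU by blast
    thus False using t by simp
  qed
  have ue: "u \<in> edom R"
    using uK FR[of u] unfolding K_def edom_def by (auto dest: order_trans intro: le_less_trans)
  have "u \<in> tikh A R \<alpha> g"
    unfolding tikh_def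
  proof (intro CollectI conjI ballI)
    show "u \<in> edom R" by (rule ue)
    fix w
    have "F u \<le> F w" using um unfolding m_def by (meson INF_lower UNIV_I order_trans)
    thus "ereal ((norm (g - A u))\<^sup>2 / (2 * \<alpha>)) + R u \<le> ereal ((norm (g - A w))\<^sup>2 / (2 * \<alpha>)) + R w"
      by (simp add: F_def a_def)
  qed
  thus ?thesis by blast
qed

lemma rho1_bound:
  fixes A :: "'a::real_vector \<Rightarrow> 'b::real_inner"
  assumes pc: "proper_convex R" and lin: "linear A" and al: "\<alpha> > 0"
    and u: "u \<in> tikh A R \<alpha> y"
  shows "rho1 A R u \<le> ereal (norm (y - A u) / \<alpha>)"
  unfolding rho1_def
proof (rule SUP_least)
  fix p assume "p \<in> {(\<beta>, z\<^sub>\<beta>). \<beta> > 0 \<and> z\<^sub>\<beta> \<in> tikh A R \<beta> (A u)}"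
  then obtain \<beta> w where p: "p = (\<beta>, w)" "\<beta> > 0" "w \<in> tikh A R \<beta> (A u)" by auto
  have "norm (A u - A w) \<le> \<beta> * (norm (y - A u) / \<alpha>)" by (rule sc[OF pc lin al p(2) u p(3)])
  hence "norm (A u - A w) / \<beta> \<le> norm (y - A u) / \<alpha>" using p(2) by (simp add: divide_le_eq mult.commute)
  thus "ereal (norm (A u - A (snd p)) / fst p) \<le> ereal (norm (y - A u) / \<alpha>)" using p by simp
qed

lemma rho1_lower:
  assumes "\<beta> > 0" "w \<in> tikh A R \<beta> (A z)"
  shows "ereal (norm (A z - A w) / \<beta>) \<le> rho1 A R z"
  unfolding rho1_def
  using assms by (intro SUP_upper2[of "(\<beta>, w)"]) auto

lemma ln_eqI: "(a::real) > 0 \<Longrightarrow> b > 0 \<Longrightarrow> ln a = ln b \<Longrightarrow> a = b"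
  by simp

lemma pw1:
  fixes c r \<nu> :: real
  assumes "c > 0" "r > 0" "\<nu> > 0"
  shows "c * ((c / r) powr (1 + \<nu>)) powr (\<nu> / (1 + \<nu>)) / (c / r) powr (1 + \<nu>) = r"
proof (rule ln_eqI)
  show "c * ((c / r) powr (1 + \<nu>)) powr (\<nu> / (1 + \<nu>)) / (c / r) powr (1 + \<nu>) > 0" using assms by simp
  show "r > 0" by fact
  have "ln (c * ((c / r) powr (1 + \<nu>)) powr (\<nu> / (1 + \<nu>)) / (c / r) powr (1 + \<nu>))
     = ln c + (\<nu> / (1 + \<nu>)) * ((1 + \<nu>) * (ln c - ln r)) - (1 + \<nu>) * (ln c - ln r)"
    using assms by (simp add: ln_div ln_mult ln_powr)
  also have "\<dots> = ln r" using assms by (simp add: field_simps)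
  finally show "ln (c * ((c / r) powr (1 + \<nu>)) powr (\<nu> / (1 + \<nu>)) / (c / r) powr (1 + \<nu>)) = ln r" .
qed

lemma pw2:
  fixes c r \<nu> :: real
  assumes "c > 0" "r > 0" "\<nu> > 0"
  shows "c * ((c / r) powr (1 + \<nu>)) powr (\<nu> / (1 + \<nu>)) = c powr (1 + \<nu>) * r powr (-\<nu>)"
proof (rule ln_eqI)
  show "c * ((c / r) powr (1 + \<nu>)) powr (\<nu> / (1 + \<nu>)) > 0" using assms by simp
  show "c powr (1 + \<nu>) * r powr (-\<nu>) > 0" using assms by simp
  have "ln (c * ((c / r) powr (1 + \<nu>)) powr (\<nu> / (1 + \<nu>)))
     = ln c + (\<nu> / (1 + \<nu>)) * ((1 + \<nu>) * (ln c - ln r))"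
    using assms by (simp add: ln_div ln_mult ln_powr)
  also have "\<dots> = (1 + \<nu>) * ln c + (-\<nu>) * ln r" using assms by (simp add: field_simps)
  also have "\<dots> = ln (c powr (1 + \<nu>) * r powr (-\<nu>))" using assms by (simp add: ln_mult ln_powr)
  finally show "ln (c * ((c / r) powr (1 + \<nu>)) powr (\<nu> / (1 + \<nu>))) = ln (c powr (1 + \<nu>) * r powr (-\<nu>))" .
qed

lemma pw3:
  fixes c \<alpha> \<nu> :: real
  assumes "c > 0" "\<alpha> > 0" "\<nu> > 0"
  shows "c * ((c / \<alpha>) powr (1 / (1 + \<nu>))) powr (-\<nu>) = c powr (1 / (1 + \<nu>)) * \<alpha> powr (\<nu> / (1 + \<nu>))"
proof (rule ln_eqI)
  show "c * ((c / \<alpha>) powr (1 / (1 + \<nu>))) powr (-\<nu>) > 0" using assms by simp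
  show "c powr (1 / (1 + \<nu>)) * \<alpha> powr (\<nu> / (1 + \<nu>)) > 0" using assms by simp
  have "ln (c * ((c / \<alpha>) powr (1 / (1 + \<nu>))) powr (-\<nu>))
     = ln c + (-\<nu>) * ((1 / (1 + \<nu>)) * (ln c - ln \<alpha>))"
    using assms by (simp add: ln_div ln_mult ln_powr)
  also have "\<dots> = (1 / (1 + \<nu>)) * ln c + (\<nu> / (1 + \<nu>)) * ln \<alpha>"
  proof -
    define s where "s = 1 / (1 + \<nu>)"
    have h1: "\<nu> * s = 1 - s" and h2: "\<nu> / (1 + \<nu>) = 1 - s" using assms by (auto simp: s_def field_simps)
    have "ln c + (-\<nu>) * (s * (ln c - ln \<alpha>)) = ln c - (\<nu> * s) * (ln c - ln \<alpha>)" by (simp add: algebra_simps)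
    also have "\<dots> = s * ln c + (1 - s) * ln \<alpha>" unfolding h1 by (simp add: algebra_simps)
    finally show ?thesis unfolding h2 s_def[symmetric] .
  qed
  also have "\<dots> = ln (c powr (1 / (1 + \<nu>)) * \<alpha> powr (\<nu> / (1 + \<nu>)))"
    by (subst ln_mult) (use assms in \<open>simp_all add: ln_powr\<close>)
  finally show "ln (c * ((c / \<alpha>) powr (1 / (1 + \<nu>))) powr (-\<nu>)) = ln (c powr (1 / (1 + \<nu>)) * \<alpha> powr (\<nu> / (1 + \<nu>)))" .
qed

lemma pw4:
  fixes c \<alpha> \<nu> :: real
  assumes "c > 0" "\<alpha> > 0" "\<nu> > 0"
  shows "\<alpha> * (c / \<alpha>) powr (1 / (1 + \<nu>)) = c powr (1 / (1 + \<nu>)) * \<alpha> powr (\<nu> / (1 + \<nu>))"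
proof (rule ln_eqI)
  show "\<alpha> * (c / \<alpha>) powr (1 / (1 + \<nu>)) > 0" using assms by simp
  show "c powr (1 / (1 + \<nu>)) * \<alpha> powr (\<nu> / (1 + \<nu>)) > 0" using assms by simp
  have "ln (\<alpha> * (c / \<alpha>) powr (1 / (1 + \<nu>))) = ln \<alpha> + (1 / (1 + \<nu>)) * (ln c - ln \<alpha>)"
    using assms by (simp add: ln_div ln_mult ln_powr)
  also have "\<dots> = (1 / (1 + \<nu>)) * ln c + (\<nu> / (1 + \<nu>)) * ln \<alpha>"
  proof -
    define s where "s = 1 / (1 + \<nu>)"
    have h2: "\<nu> / (1 + \<nu>) = 1 - s" using assms by (auto simp: s_def field_simps)
    have "ln \<alpha> + s * (ln c - ln \<alpha>) = s * ln c + (1 - s) * ln \<alpha>" by (simp add: algebra_simps)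
    thus ?thesis unfolding h2 s_def[symmetric] .
  qed
  also have "\<dots> = ln (c powr (1 / (1 + \<nu>)) * \<alpha> powr (\<nu> / (1 + \<nu>)))"
    by (subst ln_mult) (use assms in \<open>simp_all add: ln_powr\<close>)
  finally show "ln (\<alpha> * (c / \<alpha>) powr (1 / (1 + \<nu>))) = ln (c powr (1 / (1 + \<nu>)) * \<alpha> powr (\<nu> / (1 + \<nu>)))" .
qed

theorem proposition4p9:
  fixes \<tau> :: "('a::banach) topology"
    and R :: "'a \<Rightarrow> ereal"
    and A :: "'a \<Rightarrow> 'b::{real_inner, complete_space}"
    and \<nu> :: real and x :: 'a
  assumes "locally_convex_topology \<tau>" and "Hausdorff_space \<tau>"
    and "proper_convex R"
    and "\<And>c. compactin \<tau> {z. R z \<le> ereal c}"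
    and "linear A"
    and "continuous_map \<tau> weak_topology A"
    and "\<nu> > 0"
  shows "((\<exists>c\<^sub>1>0. \<forall>r>0. gamma A R x r \<le> ereal (c\<^sub>1 * r powr (-\<nu>)))
          \<longleftrightarrow> (\<exists>c\<^sub>2>0. \<forall>\<alpha>>0. \<forall>x\<^sub>\<alpha> \<in> tikh A R \<alpha> (A x).
                 norm (A x - A x\<^sub>\<alpha>) \<le> c\<^sub>2 * \<alpha> powr (\<nu> / (1 + \<nu>))))
    \<and> (\<forall>c\<^sub>1>0. (\<forall>r>0. gamma A R x r \<le> ereal (c\<^sub>1 * r powr (-\<nu>))) \<longrightarrow>
          (\<forall>\<alpha>>0. \<forall>x\<^sub>\<alpha> \<in> tikh A R \<alpha> (A x).
             norm (A x - A x\<^sub>\<alpha>) \<le> (4 * c\<^sub>1 powr (1 / (1 + \<nu>))) * \<alpha> powr (\<nu> / (1 + \<nu>))))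
    \<and> (\<forall>c\<^sub>2>0. (\<forall>\<alpha>>0. \<forall>x\<^sub>\<alpha> \<in> tikh A R \<alpha> (A x).
             norm (A x - A x\<^sub>\<alpha>) \<le> c\<^sub>2 * \<alpha> powr (\<nu> / (1 + \<nu>))) \<longrightarrow>
          (\<forall>r>0. gamma A R x r \<le> ereal (c\<^sub>2 powr (1 + \<nu>) * r powr (-\<nu>))))"
proof -
  note lc = assms(1) and hd = assms(2) and pc = assms(3) and cpt = assms(4)
    and lin = assms(5) and cont = assms(6) and nu = assms(7)
  have ex: "\<And>\<alpha> g. \<alpha> > 0 \<Longrightarrow> \<exists>u. u \<in> tikh A R \<alpha> g"
    by (rule tikh_exists[OF lc hd pc cpt cont])
  have P12: "\<forall>\<alpha>>0. \<forall>x\<^sub>\<alpha> \<in> tikh A R \<alpha> (A x).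
             norm (A x - A x\<^sub>\<alpha>) \<le> (4 * c\<^sub>1 powr (1 / (1 + \<nu>))) * \<alpha> powr (\<nu> / (1 + \<nu>))"
    if c1: "c\<^sub>1 > 0" and H1: "\<forall>r>0. gamma A R x r \<le> ereal (c\<^sub>1 * r powr (-\<nu>))" for c\<^sub>1
  proof (intro allI impI ballI)
    fix \<alpha> u assume al: "\<alpha> > 0" and u: "u \<in> tikh A R \<alpha> (A x)"
    define K where "K = c\<^sub>1 powr (1 / (1 + \<nu>)) * \<alpha> powr (\<nu> / (1 + \<nu>))"
    have K0: "K > 0" using c1 al by (simp add: K_def)
    define r where "r = (c\<^sub>1 / \<alpha>) powr (1 / (1 + \<nu>))"
    have r0: "r > 0" using c1 al by (simp add: r_def)
    have e1: "c\<^sub>1 * r powr (-\<nu>) = K" unfolding r_def K_def by (rule pw3[OF c1 al nu])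
    have e2: "\<alpha> * r = K" unfolding r_def K_def by (rule pw4[OF c1 al nu])
    have "gamma A R x r \<le> ereal (c\<^sub>1 * r powr (-\<nu>))" using H1 r0 by blast
    hence "gamma A R x r \<le> ereal K" unfolding e1 .
    also have "ereal K < ereal (K + K / 2)" using K0 by simp
    finally have "gamma A R x r < ereal (K + K / 2)" .
    then obtain z where zB: "z \<in> Bset A R r" and zlt: "ereal (norm (A x - A z)) < ereal (K + K / 2)"
      unfolding gamma_def by (auto simp: INF_less_iff)
    have zlt': "norm (A x - A z) < K + K / 2" using zlt by simp
    obtain w where w: "w \<in> tikh A R \<alpha> (A z)" using ex[OF al] by blast
    have "ereal (norm (A z - A w) / \<alpha>) \<le> rho1 A R z" by (rule rho1_lower[OF al w])
    also have "\<dots> \<le> ereal r" using zB unfolding Bset_def by simp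
    finally have "norm (A z - A w) / \<alpha> \<le> r" by simp
    hence zw: "norm (A z - A w) \<le> K" using al e2 by (simp add: divide_le_eq mult.commute)
    have uw: "norm (A u - A w) \<le> norm (A x - A z)" by (rule ne[OF pc lin al u w])
    have "norm (A x - A u) \<le> norm (A x - A z) + norm (A z - A w) + norm (A w - A u)"
    proof -
      have "norm (A x - A u) \<le> norm (A x - A w) + norm (A w - A u)" by (rule norm_diff_triangle_le[of _ "A w"]) simp_all
      moreover have "norm (A x - A w) \<le> norm (A x - A z) + norm (A z - A w)" by (rule norm_diff_triangle_le[of _ "A z"]) simp_all
      ultimately show ?thesis by simp
    qed
    also have "\<dots> \<le> 4 * K" using zlt' zw uw by (simp add: norm_minus_commute)
    finally show "norm (A x - A u) \<le> (4 * c\<^sub>1 powr (1 / (1 + \<nu>))) * \<alpha> powr (\<nu> / (1 + \<nu>))"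
      by (simp add: K_def)
  qed
  have P21: "\<forall>r>0. gamma A R x r \<le> ereal (c\<^sub>2 powr (1 + \<nu>) * r powr (-\<nu>))"
    if c2: "c\<^sub>2 > 0" and H2: "\<forall>\<alpha>>0. \<forall>x\<^sub>\<alpha> \<in> tikh A R \<alpha> (A x).
             norm (A x - A x\<^sub>\<alpha>) \<le> c\<^sub>2 * \<alpha> powr (\<nu> / (1 + \<nu>))" for c\<^sub>2
  proof (intro allI impI)
    fix r :: real assume r0: "r > 0"
    define \<alpha> where "\<alpha> = (c\<^sub>2 / r) powr (1 + \<nu>)"
    have al: "\<alpha> > 0" using c2 r0 by (simp add: \<alpha>_def)
    obtain u where u: "u \<in> tikh A R \<alpha> (A x)" using ex[OF al] by blast
    have N: "norm (A x - A u) \<le> c\<^sub>2 * \<alpha> powr (\<nu> / (1 + \<nu>))" using H2 al u by blast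
    have "rho1 A R u \<le> ereal (norm (A x - A u) / \<alpha>)" by (rule rho1_bound[OF pc lin al u])
    also have "norm (A x - A u) / \<alpha> \<le> c\<^sub>2 * \<alpha> powr (\<nu> / (1 + \<nu>)) / \<alpha>"
      using N al by (simp add: divide_right_mono)
    also have "c\<^sub>2 * \<alpha> powr (\<nu> / (1 + \<nu>)) / \<alpha> = r" unfolding \<alpha>_def by (rule pw1[OF c2 r0 nu])
    finally have "u \<in> Bset A R r" unfolding Bset_def by simp
    hence "gamma A R x r \<le> ereal (norm (A x - A u))" unfolding gamma_def by (rule INF_lower)
    also have "\<dots> \<le> ereal (c\<^sub>2 * \<alpha> powr (\<nu> / (1 + \<nu>)))" using N by simp
    also have "c\<^sub>2 * \<alpha> powr (\<nu> / (1 + \<nu>)) = c\<^sub>2 powr (1 + \<nu>) * r powr (-\<nu>)"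
      unfolding \<alpha>_def by (rule pw2[OF c2 r0 nu])
    finally show "gamma A R x r \<le> ereal (c\<^sub>2 powr (1 + \<nu>) * r powr (-\<nu>))" .
  qed
  have iff: "(\<exists>c\<^sub>1>0. \<forall>r>0. gamma A R x r \<le> ereal (c\<^sub>1 * r powr (-\<nu>)))
          \<longleftrightarrow> (\<exists>c\<^sub>2>0. \<forall>\<alpha>>0. \<forall>x\<^sub>\<alpha> \<in> tikh A R \<alpha> (A x).
                 norm (A x - A x\<^sub>\<alpha>) \<le> c\<^sub>2 * \<alpha> powr (\<nu> / (1 + \<nu>)))"
  proof
    assume "\<exists>c\<^sub>1>0. \<forall>r>0. gamma A R x r \<le> ereal (c\<^sub>1 * r powr (-\<nu>))"
    then obtain c1 where c1: "c1 > 0" "\<forall>r>0. gamma A R x r \<le> ereal (c1 * r powr (-\<nu>))" by blast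
    have "4 * c1 powr (1 / (1 + \<nu>)) > 0" using c1 by simp
    thus "\<exists>c\<^sub>2>0. \<forall>\<alpha>>0. \<forall>x\<^sub>\<alpha> \<in> tikh A R \<alpha> (A x).
                 norm (A x - A x\<^sub>\<alpha>) \<le> c\<^sub>2 * \<alpha> powr (\<nu> / (1 + \<nu>))"
      using P12[OF c1] by blast
  next
    assume "\<exists>c\<^sub>2>0. \<forall>\<alpha>>0. \<forall>x\<^sub>\<alpha> \<in> tikh A R \<alpha> (A x).
                 norm (A x - A x\<^sub>\<alpha>) \<le> c\<^sub>2 * \<alpha> powr (\<nu> / (1 + \<nu>))"
    then obtain c2 where c2: "c2 > 0" "\<forall>\<alpha>>0. \<forall>x\<^sub>\<alpha> \<in> tikh A R \<alpha> (A x).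
                 norm (A x - A x\<^sub>\<alpha>) \<le> c2 * \<alpha> powr (\<nu> / (1 + \<nu>))" by blast
    have "c2 powr (1 + \<nu>) > 0" using c2 by simp
    thus "\<exists>c\<^sub>1>0. \<forall>r>0. gamma A R x r \<le> ereal (c\<^sub>1 * r powr (-\<nu>))"
      using P21[OF c2] by blast
  qed
  show ?thesis using iff P12 P21 by blast
qed

end
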